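(* Let $\alpha\in[0,1)$ be irrational and $f(x)=\{x\}-\tfrac12$. There exist absolute constants $A_0,C>0$ such that for every $K$ with $a_K\ge A_0$ and every integer $0\le b\le a_K$, $$\Big|S_{bq_{K-1}}(f,\alpha)-(-1)^K\frac b2\Big(1-\frac b{a_K}\Big)\Big|\le C.$$
   Context: $\alpha=[0;a_1,a_2,\dots]$ is the continued fraction expansion with convergent denominators $q_0=1,q_1=a_1,q_{k+1}=a_{k+1}q_k+q_{k-1}$. $\{x\}$ is the fractional part. $S_N(f,\alpha):=\sum_{n=1}^N f(n\alpha)-N\int_0^1f(x)\,dx$. *)

theory Defs
  imports "HOL-Analysis.Analysis"
begin

fun gauss_iter :: "real \<Rightarrow> nat \<Rightarrow> real" where
  "gauss_iter x 0 = x"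
| "gauss_iter x (Suc n) = frac (1 / gauss_iter x n)"

text \<open>Partial quotients: alpha = [0; a_1, a_2, ...], a_k = floor (1 / x_(k-1)) for k >= 1.\<close>
definition cf_a :: "real \<Rightarrow> nat \<Rightarrow> nat" where
  "cf_a x k = nat \<lfloor>1 / gauss_iter x (k - 1)\<rfloor>"

fun cf_q :: "real \<Rightarrow> nat \<Rightarrow> nat" where
  "cf_q x 0 = 1"
| "cf_q x (Suc 0) = cf_a x 1"
| "cf_q x (Suc (Suc n)) = cf_a x (Suc (Suc n)) * cf_q x (Suc n) + cf_q x n"

definition S_sum :: "nat \<Rightarrow> (real \<Rightarrow> real) \<Rightarrow> real \<Rightarrow> real" where
  "S_sum N f \<alpha> = (\<Sum>n = 1..N. f (real n * \<alpha>)) - real N * integral {0..1} f"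

end

theory Submission
  imports Defs
begin


fun Qs :: "real \<Rightarrow> nat \<Rightarrow> int" where
  "Qs a 0 = 0" | "Qs a (Suc 0) = 1"
| "Qs a (Suc (Suc n)) = int (cf_a a (Suc n)) * Qs a (Suc n) + Qs a n"

fun Ps :: "real \<Rightarrow> nat \<Rightarrow> int" where
  "Ps a 0 = 1" | "Ps a (Suc 0) = 0"
| "Ps a (Suc (Suc n)) = int (cf_a a (Suc n)) * Ps a (Suc n) + Ps a n"

lemma Qs_cf: "Qs a (Suc k) = int (cf_q a k)"
  by (induction a k rule: cf_q.induct) (auto simp: cf_a_def)

lemma det: "Qs a (Suc n) * Ps a n - Ps a (Suc n) * Qs a n = (-1) ^ n"
proof (induction n)
  case 0 then show ?case by simp
next
  case (Suc n)
  then show ?case by (simp add: algebra_simps)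
qed

context
  fixes \<alpha> :: real
  assumes a0: "0 \<le> \<alpha>" and a1: "\<alpha> < 1" and airr: "\<alpha> \<notin> \<rat>"
begin

lemma gi_props: "gauss_iter \<alpha> k \<notin> \<rat> \<and> 0 < gauss_iter \<alpha> k \<and> gauss_iter \<alpha> k < 1"
proof (induction k)
  case 0
  have "\<alpha> \<noteq> 0" using airr by auto
  then show ?case using a0 a1 airr by auto
next
  case (Suc k)
  let ?x = "gauss_iter \<alpha> k"
  have e: "1 / ?x = frac (1 / ?x) + of_int \<lfloor>1/?x\<rfloor>" by (simp add: frac_def)
  have "frac (1 / ?x) \<notin> \<rat>"
  proof
    assume "frac (1 / ?x) \<in> \<rat>"
    then have "1 / ?x \<in> \<rat>" by (subst e) (auto intro: Rats_add)
    then have "1 / (1 / ?x) \<in> \<rat>" by (rule Rats_divide[OF Rats_1])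
    then show False using Suc by simp
  qed
  moreover have "frac (1/?x) \<noteq> 0" using calculation by (metis Rats_0)
  ultimately show ?case using frac_lt_1[of "1/?x"] frac_ge_0[of "1/?x"] by (auto simp: order_less_le)
qed

lemma a_pos: "k \<ge> 1 \<Longrightarrow> cf_a \<alpha> k \<ge> 1"
proof -
  assume "k \<ge> 1"
  let ?x = "gauss_iter \<alpha> (k-1)"
  have "0 < ?x" "?x < 1" using gi_props by auto
  then have "1 < 1 / ?x" by simp
  then have "\<lfloor>1/?x\<rfloor> \<ge> 1" by linarith
  then show ?thesis unfolding cf_a_def by linarith
qed

lemma gi_rec: "1 / gauss_iter \<alpha> k = real (cf_a \<alpha> (Suc k)) + gauss_iter \<alpha> (Suc k)"
proof -
  let ?x = "gauss_iter \<alpha> k"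
  have "0 < ?x" "?x < 1" using gi_props by auto
  then have "1 < 1 / ?x" by simp
  then have "\<lfloor>1/?x\<rfloor> \<ge> 1" by linarith
  then have h: "0 \<le> \<lfloor>1/?x\<rfloor>" by linarith
  have "real (nat \<lfloor>1/?x\<rfloor>) = of_int \<lfloor>1/?x\<rfloor>" by (rule of_nat_nat[OF h])
  then show ?thesis unfolding cf_a_def by (simp add: frac_def)
qed

lemma Qs_mono: "0 \<le> Qs \<alpha> n \<and> Qs \<alpha> n \<le> Qs \<alpha> (Suc n) \<and> 1 \<le> Qs \<alpha> (Suc n)"
proof (induction n rule: less_induct)
  case (less n)
  show ?case
  proof (cases n)
    case 0 then show ?thesis by simp
  next
    case (Suc m)
    then have IH: "0 \<le> Qs \<alpha> m \<and> Qs \<alpha> m \<le> Qs \<alpha> (Suc m) \<and> 1 \<le> Qs \<alpha> (Suc m)" using less by auto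
    have "cf_a \<alpha> (Suc m) \<ge> 1" using a_pos by auto
    then have h: "int (cf_a \<alpha> (Suc m)) * Qs \<alpha> (Suc m) \<ge> 1 * Qs \<alpha> (Suc m)" using IH
      by (intro mult_right_mono) auto
    have e: "Qs \<alpha> (Suc (Suc m)) = int (cf_a \<alpha> (Suc m)) * Qs \<alpha> (Suc m) + Qs \<alpha> m" by simp
    show ?thesis unfolding Suc e using h IH by linarith
  qed
qed

lemma alpha_form: "\<alpha> * (Qs \<alpha> (Suc k) + gauss_iter \<alpha> k * Qs \<alpha> k) = Ps \<alpha> (Suc k) + gauss_iter \<alpha> k * Ps \<alpha> k"
proof (induction k)
  case 0 then show ?case by simp
next
  case (Suc k)
  let ?x = "gauss_iter \<alpha> k" and ?y = "gauss_iter \<alpha> (Suc k)"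
  have r: "real (cf_a \<alpha> (Suc k)) + ?y = 1 / ?x" using gi_rec by simp
  have xp: "?x > 0" using gi_props by auto
  have e1: "real_of_int (Qs \<alpha> (Suc (Suc k))) + ?y * real_of_int (Qs \<alpha> (Suc k))
     = (real (cf_a \<alpha> (Suc k)) + ?y) * real_of_int (Qs \<alpha> (Suc k)) + real_of_int (Qs \<alpha> k)"
    by (simp add: algebra_simps)
  have e2: "real_of_int (Ps \<alpha> (Suc (Suc k))) + ?y * real_of_int (Ps \<alpha> (Suc k))
     = (real (cf_a \<alpha> (Suc k)) + ?y) * real_of_int (Ps \<alpha> (Suc k)) + real_of_int (Ps \<alpha> k)"
    by (simp add: algebra_simps)
  have "\<alpha> * (Qs \<alpha> (Suc (Suc k)) + ?y * Qs \<alpha> (Suc k)) = \<alpha> * ((1/?x) * Qs \<alpha> (Suc k) + Qs \<alpha> k)"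
    by (simp only: e1 r)
  also have "\<dots> = (1/?x) * (\<alpha> * (Qs \<alpha> (Suc k) + ?x * Qs \<alpha> k))" using xp by (simp add: field_simps)
  also have "\<dots> = (1/?x) * (Ps \<alpha> (Suc k) + ?x * Ps \<alpha> k)" using Suc by simp
  also have "\<dots> = (1/?x) * Ps \<alpha> (Suc k) + Ps \<alpha> k" using xp by (simp add: field_simps)
  also have "\<dots> = Ps \<alpha> (Suc (Suc k)) + ?y * Ps \<alpha> (Suc k)"
    by (simp only: e2 r)
  finally show ?case .
qed

lemma delta_form: "Qs \<alpha> (Suc k) * \<alpha> - Ps \<alpha> (Suc k) = (-1)^k * gauss_iter \<alpha> k / (Qs \<alpha> (Suc k) + gauss_iter \<alpha> k * Qs \<alpha> k)"
proof -
  let ?x = "gauss_iter \<alpha> k"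
  let ?D = "Qs \<alpha> (Suc k) + ?x * Qs \<alpha> k"
  have "?x > 0" using gi_props by auto
  moreover have "Qs \<alpha> (Suc k) \<ge> 1" "Qs \<alpha> k \<ge> 0" using Qs_mono by auto
  ultimately have Dp: "?D > 0" by (smt (verit) mult_nonneg_nonneg of_int_0_le_iff of_int_1_le_iff)
  have "(Qs \<alpha> (Suc k) * \<alpha> - Ps \<alpha> (Suc k)) * ?D = Qs \<alpha> (Suc k) * (\<alpha> * ?D) - Ps \<alpha> (Suc k) * ?D"
    by (simp add: algebra_simps)
  also have "\<dots> = ?x * of_int (Qs \<alpha> (Suc k) * Ps \<alpha> k - Ps \<alpha> (Suc k) * Qs \<alpha> k)"
    by (simp only: alpha_form) (simp add: algebra_simps)
  also have "\<dots> = (-1)^k * ?x" by (simp only: det) simp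
  finally show ?thesis using Dp by (simp add: field_simps)
qed

end


lemma periodic_sum:
  fixes g :: "nat \<Rightarrow> real"
  assumes per: "\<And>n. g (n + Q) = g n"
  shows "(\<Sum>n=1..b*Q. g n) = real b * (\<Sum>n=1..Q. g n)"
proof (induction b)
  case 0 then show ?case by simp
next
  case (Suc b)
  have gp: "g (i + b*Q) = g i" for i
  proof (induction b)
    case 0 show ?case by simp
  next
    case (Suc b)
    have "i + Suc b * Q = (i + b*Q) + Q" by simp
    then show ?case using per Suc by metis
  qed
  have "(\<Sum>n=1..Suc b*Q. g n) = (\<Sum>n=1..b*Q + Q. g n)" by (simp add: add.commute)
  also have "\<dots> = (\<Sum>n=1..b*Q. g n) + (\<Sum>n=b*Q+1..b*Q+Q. g n)"
    by (rule sum.ub_add_nat) simp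
  also have "(\<Sum>n=b*Q+1..b*Q+Q. g n) = (\<Sum>n=1..Q. g (n + b*Q))"
    using sum.shift_bounds_cl_nat_ivl[of g 1 "b*Q" Q] by (simp add: add.commute)
  also have "\<dots> = (\<Sum>n=1..Q. g n)" using gp by simp
  finally show ?case using Suc by (simp add: algebra_simps)
qed

lemma sum_id_real: "(\<Sum>n=1..N. real n) = real N * (real N + 1) / 2"
  by (induction N) (simp_all add: field_simps)

lemma sum_lt_real: "(\<Sum>n<N. real n) = real N * (real N - 1) / 2"
  by (induction N) (simp_all add: field_simps)

lemma block_mod:
  fixes p q :: int
  assumes q1: "q \<ge> 1" and cop: "coprime q p"
  shows "(\<Sum>n=1..nat q. real_of_int ((int n * p) mod q)) = real_of_int q * (real_of_int q - 1) / 2"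
proof -
  let ?Q = "nat q"
  let ?g = "\<lambda>n::nat. real_of_int ((int n * p) mod q)"
  have s1: "(\<Sum>n=1..?Q. ?g n) = (\<Sum>n<?Q. ?g n)"
  proof -
    have "(\<Sum>n=1..?Q. ?g n) = (\<Sum>n=0..?Q. ?g n)" by (simp add: sum.atLeast_Suc_atMost)
    also have "\<dots> = (\<Sum>n<?Q. ?g n) + ?g ?Q"
      using q1 by (simp add: sum.atMost_Suc lessThan_Suc_atMost[symmetric] atLeast0AtMost)
    also have "?g ?Q = 0" using q1 by simp
    finally show ?thesis by simp
  qed
  let ?h = "\<lambda>n::nat. nat ((int n * p) mod q)"
  have inj: "inj_on ?h {..<?Q}"
  proof (rule inj_onI)
    fix x y assume x: "x \<in> {..<?Q}" and y: "y \<in> {..<?Q}" and e: "?h x = ?h y"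
    have "(int x * p) mod q = (int y * p) mod q" using e q1
      by (metis eq_nat_nat_iff pos_mod_sign zero_less_one order_less_le_trans)
    then have "q dvd (int x - int y) * p" by (metis mod_eq_dvd_iff left_diff_distrib)
    then have dv: "q dvd (int x - int y)" using cop by (simp add: coprime_dvd_mult_left_iff)
    have lt: "\<bar>int x - int y\<bar> < q" using x y q1 by auto
    have "int x - int y = 0"
    proof (rule ccontr)
      assume ne: "int x - int y \<noteq> 0"
      from dvd_imp_le_int[OF ne dv] lt q1 show False by simp
    qed
    then show "x = y" by simp
  qed
  have sub: "?h ` {..<?Q} \<subseteq> {..<?Q}"
  proof
    fix z assume "z \<in> ?h ` {..<?Q}"
    then obtain n where "z = ?h n" by auto
    moreover have "(int n * p) mod q < q" "0 \<le> (int n * p) mod q" using q1 by auto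
    ultimately show "z \<in> {..<?Q}" by auto
  qed
  have bij: "bij_betw ?h {..<?Q} {..<?Q}"
    unfolding bij_betw_def using inj endo_inj_surj[OF _ sub inj] by simp
  have "(\<Sum>n<?Q. ?g n) = (\<Sum>n<?Q. real (?h n))"
    using q1 by (intro sum.cong) auto
  also have "\<dots> = (\<Sum>i<?Q. real i)" by (rule sum.reindex_bij_betw[OF bij])
  also have "\<dots> = real ?Q * (real ?Q - 1) / 2" by (rule sum_lt_real)
  finally have "(\<Sum>n<?Q. ?g n) = real ?Q * (real ?Q - 1) / 2" .
  then show ?thesis using s1 q1 by simp
qed

lemma block_dvd:
  fixes q :: int
  assumes q1: "q \<ge> 1"
  shows "(\<Sum>n=1..nat q. (if q dvd int n then 1 else 0::real)) = 1"
proof -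
  have "{1..nat q} = insert (nat q) {1..<nat q}" using q1 by auto
  moreover have "(\<Sum>n\<in>{1..<nat q}. (if q dvd int n then 1 else 0::real)) = 0"
  proof (rule sum.neutral, rule ballI)
    fix n assume n: "n \<in> {1..<nat q}"
    have "\<not> q dvd int n"
    proof
      assume "q dvd int n"
      moreover have "int n > 0" "int n < q" using n by auto
      ultimately show False using zdvd_imp_le by fastforce
    qed
    then show "(if q dvd int n then 1 else 0::real) = 0" by simp
  qed
  ultimately show ?thesis using q1 by simp
qed

lemma frac_n:
  fixes p q :: int and \<alpha> \<delta> :: real and n :: nat
  assumes q1: "q \<ge> 1" and cop: "coprime q p" and qa: "q * \<alpha> = p + \<delta>" and dnz: "\<delta> \<noteq> 0"
    and n1: "n \<ge> 1" and small: "real n * \<bar>\<delta>\<bar> < 1"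
  shows "frac (real n * \<alpha>) = real_of_int ((int n * p) mod q) / q + real n * \<delta> / q
           + (if q dvd int n \<and> \<delta> < 0 then 1 else 0)"
proof -
  let ?m = "(int n * p) mod q"
  let ?a = "real_of_int ?m / q + real n * \<delta> / q + (if q dvd int n \<and> \<delta> < 0 then 1 else 0)"
  have qp: "real_of_int q > 0" using q1 by simp
  have al: "\<alpha> = (p + \<delta>) / q" using qa qp by (simp add: eq_divide_eq mult.commute)
  have na: "real n * \<alpha> = (real n * p + real n * \<delta>) / q" unfolding al
    by (simp add: distrib_left)
  have dm: "int n * p = q * ((int n * p) div q) + ?m" by simp
  then have "real n * p = real_of_int q * real_of_int ((int n * p) div q) + real_of_int ?m"
    by (metis of_int_add of_int_mult of_int_of_nat_eq)
  then have na2: "real n * \<alpha> = real_of_int ((int n * p) div q) + (real_of_int ?m + real n * \<delta>) / q"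
    using na qp by (simp add: field_simps)
  have bnd: "\<bar>real n * \<delta>\<bar> < 1" using small by (simp add: abs_mult)
  show ?thesis
  proof (cases "q dvd int n")
    case True
    then have m0: "?m = 0" by simp
    show ?thesis
    proof (cases "\<delta> < 0")
      case True
      have e1: "real n * \<alpha> - ?a = real_of_int ((int n * p) div q) - 1" using na2 m0 \<open>q dvd int n\<close> True
        by (simp add: field_simps)
      have nd: "real n * \<delta> < 0" using n1 True by (simp add: mult_pos_neg)
      have q1r: "real_of_int q \<ge> 1" using q1 by simp
      have "- real_of_int q < real n * \<delta>" using bnd nd q1r by linarith
      then have "-1 < real n * \<delta> / q" using qp by (simp add: less_divide_eq)
      moreover have "real n * \<delta> / q < 0" using nd qp by (simp add: divide_neg_pos)
      ultimately have b2: "0 \<le> ?a" "?a < 1" using m0 \<open>q dvd int n\<close> True by simp_all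
      have ie: "real n * \<alpha> - ?a \<in> \<int>" unfolding e1
        by (metis Ints_of_int of_int_diff of_int_1)
      show ?thesis using ie b2 frac_unique_iff by blast
    next
      case False
      then have dp: "\<delta> > 0" using dnz by simp
      have "real n * \<alpha> - ?a = real_of_int ((int n * p) div q)" using na2 m0 False
        by (simp add: field_simps)
      moreover have "0 \<le> real n * \<delta> / q" "real n * \<delta> / q < 1" using bnd qp dp n1 q1
        by (auto simp: field_simps) 
      ultimately show ?thesis unfolding frac_unique_iff using m0 False by auto
    qed
  next
    case False
    have "\<not> q dvd int n * p" using False cop by (simp add: coprime_dvd_mult_left_iff)
    then have "?m \<noteq> 0" by (simp add: dvd_eq_mod_eq_0)
    moreover have "0 \<le> ?m" "?m < q" using q1 by auto
    ultimately have m1: "1 \<le> ?m" "?m \<le> q - 1" by auto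
    then have r1: "1 \<le> real_of_int ?m" "real_of_int ?m \<le> real_of_int q - 1" by linarith+
    have aeq: "?a = (real_of_int ?m + real n * \<delta>) / q" using False by (simp add: add_divide_distrib)
    have e: "real n * \<alpha> - ?a = real_of_int ((int n * p) div q)" using na2 aeq by simp
    have "0 \<le> (real_of_int ?m + real n * \<delta>) / q" "(real_of_int ?m + real n * \<delta>) / q < 1"
      using bnd qp r1 by (auto simp: field_simps)
    then have b2: "0 \<le> ?a" "?a < 1" unfolding aeq by simp_all
    have ie: "real n * \<alpha> - ?a \<in> \<int>" unfolding e by simp
    show ?thesis using ie b2 frac_unique_iff by blast
  qed
qed



lemma total_sum:
  fixes p q :: int and \<alpha> \<delta> :: real and b :: nat
  assumes q1: "q \<ge> 1" and cop: "coprime q p" and qa: "q * \<alpha> = p + \<delta>" and dnz: "\<delta> \<noteq> 0"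
    and small: "real (b * nat q) * \<bar>\<delta>\<bar> < 1"
  shows "(\<Sum>n=1..b * nat q. frac (real n * \<alpha>)) =
     real b * (real_of_int q - 1) / 2 + \<delta> * real b * (real b * q + 1) / 2 + (if \<delta> < 0 then real b else 0)"
proof -
  let ?Q = "nat q"
  let ?N = "b * ?Q"
  let ?g = "\<lambda>n::nat. real_of_int ((int n * p) mod q)"
  let ?h = "\<lambda>n::nat. (if q dvd int n then 1 else 0::real)"
  have qp: "real_of_int q > 0" using q1 by simp
  have "(\<Sum>n=1..?N. frac (real n * \<alpha>)) =
     (\<Sum>n=1..?N. ?g n / q + real n * \<delta> / q + (if \<delta> < 0 then ?h n else 0))"
  proof (rule sum.cong)
    fix n assume n: "n \<in> {1..?N}"
    have nN: "n \<le> ?N" using n by simp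
    have "real n * \<bar>\<delta>\<bar> \<le> real ?N * \<bar>\<delta>\<bar>"
      by (rule mult_right_mono[OF iffD2[OF of_nat_le_iff nN] abs_ge_zero])
    then have "real n * \<bar>\<delta>\<bar> < 1" using small by linarith
    then show "frac (real n * \<alpha>) = ?g n / q + real n * \<delta> / q + (if \<delta> < 0 then ?h n else 0)"
      using frac_n[OF q1 cop qa dnz, of n] n by auto
  qed simp
  also have "\<dots> = (\<Sum>n=1..?N. ?g n) / q + \<delta> / q * (\<Sum>n=1..?N. real n) + (if \<delta> < 0 then (\<Sum>n=1..?N. ?h n) else 0)"
    by (simp add: sum.distrib sum_divide_distrib sum_distrib_left mult.commute)
  also have "(\<Sum>n=1..?N. ?g n) = real b * (real_of_int q * (real_of_int q - 1) / 2)"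
  proof -
    have "?g (n + ?Q) = ?g n" for n
    proof -
      have "int (n + ?Q) * p = int n * p + q * p" using q1 by (simp add: algebra_simps)
      then show ?thesis by simp
    qed
    then show ?thesis using periodic_sum[of ?g ?Q b] block_mod[OF q1 cop] by simp
  qed
  also have "(\<Sum>n=1..?N. ?h n) = real b"
  proof -
    have "?h (n + ?Q) = ?h n" for n
    proof -
      have "int (n + ?Q) = int n + q" using q1 by simp
      then show ?thesis by (simp add: dvd_add_left_iff)
    qed
    then show ?thesis using periodic_sum[of ?h ?Q b] block_dvd[OF q1] by simp
  qed
  also have "(\<Sum>n=1..?N. real n) = real ?N * (real ?N + 1) / 2" by (rule sum_id_real)
  also have "real ?N = real b * real_of_int q" using q1 by simp
  finally have eq: "(\<Sum>n=1..?N. frac (real n * \<alpha>)) = real b * (real_of_int q * (real_of_int q - 1) / 2) / q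
     + \<delta> / q * (real b * real_of_int q * (real b * real_of_int q + 1) / 2) + (if \<delta> < 0 then real b else 0)" .
  have f1: "real b * (real_of_int q * (real_of_int q - 1) / 2) / q = real b * (real_of_int q - 1) / 2"
    using qp by (simp add: field_simps)
  have f2: "\<delta> / q * (real b * real_of_int q * (real b * real_of_int q + 1) / 2) = \<delta> * real b * (real b * q + 1) / 2"
    using qp by (simp add: field_simps)
  show ?thesis unfolding eq f1 f2 by simp
qed

lemma integral_saw: "integral {0..1} (\<lambda>x::real. frac x - 1/2) = 0"
proof -
  have d: "((\<lambda>x::real. x^2/2 - x/2) has_vector_derivative (x - 1/2)) (at x within {0..1})" for x
    by (auto intro!: derivative_eq_intros simp: has_real_derivative_iff_has_vector_derivative[symmetric])
  have "((\<lambda>x::real. x - 1/2) has_integral ((1::real)^2/2 - 1/2 - (0^2/2 - 0/2))) {0..1}"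
    by (rule fundamental_theorem_of_calculus) (use d in auto)
  then have i1: "((\<lambda>x::real. x - 1/2) has_integral 0) {0..1}" by simp
  have "((\<lambda>x::real. frac x - 1/2) has_integral 0) {0..1}"
  proof (rule has_integral_spike_finite[OF _ _ i1])
    show "finite {1::real}" by simp
    fix x :: real assume "x \<in> {0..1} - {1}"
    then show "frac x - 1/2 = x - 1/2" by (auto simp: frac_eq)
  qed
  then show ?thesis by (rule integral_unique)
qed

lemma final_ineq:
  fixes q q' a y b \<delta> e D :: real
  assumes q1: "q \<ge> 1" and q'0: "0 \<le> q'" and q'q: "q' \<le> q" and a1: "a \<ge> 1" and y0: "0 < y" and y1: "y < 1"
    and b0: "0 \<le> b" and ba: "b \<le> a" and De: "D = q * (a + y) + q'" and e: "e = 1 \<or> e = -1"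
    and de: "\<delta> = e / D"
  shows "\<bar>(- b/2 + \<delta> * b * (b * q + 1) / 2 + (if \<delta> < 0 then b else 0)) - (- e) * (b/2) * (1 - b/a)\<bar> \<le> 2"
proof -
  have Dqa: "D \<ge> q * a" using De q1 y0 q'0 by (simp add: algebra_simps)
  have "q * a \<ge> 1 * 1" using q1 a1 by (intro mult_mono) auto
  then have qa1: "q * a \<ge> 1" by simp
  have Dp: "D > 0" using Dqa qa1 by linarith
  define u where "u = 1/a - q/D"
  have ueq: "u = (q*y + q') / (a * D)" unfolding u_def using Dp a1 De by (simp add: field_simps)
  have u0: "u \<ge> 0" unfolding ueq using q1 y0 q'0 Dp a1 by simp
  have qy: "q * y \<le> q * 1" using y1 q1 by (intro mult_left_mono) auto
  have "a * (q*y + q') \<le> a * (2*q)" using a1 q'q qy by (intro mult_left_mono) auto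
  also have "\<dots> \<le> 2 * D" using Dqa by (simp add: algebra_simps)
  finally have "a * (q*y+q') \<le> 2 * D" .
  then have le2: "a * (q*y+q') / D \<le> 2" using Dp by (simp add: divide_le_eq mult.commute)
  have "u * a^2 = a * (q*y+q') / D" unfolding ueq using a1 Dp by (simp add: field_simps power2_eq_square)
  then have ua2: "u * a^2 \<le> 2" using le2 by simp
  have "b^2 \<le> a^2" using b0 ba by (intro power_mono) auto
  then have "u * b^2 \<le> u * a^2" using u0 by (intro mult_left_mono) auto
  then have ub: "u * b^2 \<le> 2" using ua2 by linarith
  have ub0: "u * b^2 \<ge> 0" using u0 by simp
  have "1 * a \<le> q * a" using q1 a1 by (intro mult_right_mono) auto
  then have "b \<le> q * a" using ba by simp
  then have bD: "b / D \<le> 1" using Dqa Dp by (simp add: divide_le_eq)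
  have bD0: "b / D \<ge> 0" using b0 Dp by simp
  show ?thesis using e
  proof
    assume e1: "e = 1"
    then have "\<delta> > 0" using de Dp by simp
    then have i0: "(if \<delta> < 0 then b else 0) = 0" by simp
    have "(- b/2 + \<delta> * b * (b * q + 1) / 2 + (if \<delta> < 0 then b else 0)) - (- e) * (b/2) * (1 - b/a)
       = - (u * b^2) / 2 + (b / D) / 2" unfolding i0 unfolding de e1 u_def using Dp a1
      by (simp add: field_simps power2_eq_square)
    then show ?thesis using ub ub0 bD bD0 by simp
  next
    assume e1: "e = -1"
    then have "\<delta> < 0" using de Dp by simp
    then have i0: "(if \<delta> < 0 then b else 0) = b" by simp
    have "(- b/2 + \<delta> * b * (b * q + 1) / 2 + (if \<delta> < 0 then b else 0)) - (- e) * (b/2) * (1 - b/a)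
       = (u * b^2) / 2 - (b / D) / 2" unfolding i0 unfolding de e1 u_def using Dp a1
      by (simp add: field_simps power2_eq_square)
    then show ?thesis using ub ub0 bD bD0 by simp
  qed
qed



lemma main_bound:
  fixes \<alpha> :: real and K b :: nat
  assumes a0: "0 \<le> \<alpha>" and a1: "\<alpha> < 1" and airr: "\<alpha> \<notin> \<rat>" and K1: "K \<ge> 1" and bK: "b \<le> cf_a \<alpha> K"
  shows "\<bar>S_sum (b * cf_q \<alpha> (K - 1)) (\<lambda>x. frac x - 1/2) \<alpha>
            - (-1) ^ K * (real b / 2) * (1 - real b / real (cf_a \<alpha> K))\<bar> \<le> 2"
proof -
  obtain k where Kk: "K = Suc k" using K1 by (cases K) auto
  define q where "q = Qs \<alpha> (Suc k)"
  define p where "p = Ps \<alpha> (Suc k)"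
  define q' where "q' = Qs \<alpha> k"
  define x where "x = gauss_iter \<alpha> k"
  define y where "y = gauss_iter \<alpha> (Suc k)"
  define a where "a = cf_a \<alpha> (Suc k)"
  define \<delta> where "\<delta> = real_of_int q * \<alpha> - p"
  define e :: real where "e = (-1)^k"
  define D where "D = real_of_int q * (real a + y) + real_of_int q'"
  have qm: "0 \<le> q'" "q' \<le> q" "1 \<le> q" using Qs_mono[OF a0 a1 airr, of k] unfolding q_def q'_def by auto
  have rn: "real (nat q) = real_of_int q" using qm by simp
  have xp: "0 < x" "x < 1" using gi_props[OF a0 a1 airr, of k] unfolding x_def by auto
  have yp: "0 < y" "y < 1" using gi_props[OF a0 a1 airr, of "Suc k"] unfolding y_def by auto
  have ap: "a \<ge> 1" using a_pos[OF a0 a1 airr, of "Suc k"] unfolding a_def by auto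
  have rec: "1 / x = real a + y" using gi_rec[OF a0 a1 airr, of k] unfolding x_def a_def y_def by simp
  have dform: "\<delta> = e * x / (q + x * q')"
    using delta_form[OF a0 a1 airr, of k] unfolding \<delta>_def e_def x_def q_def q'_def p_def by simp
  have Deq: "D = (q + x * q') / x" unfolding D_def using xp rec
    by (simp add: add_divide_distrib) (metis mult.commute times_divide_eq_right mult.right_neutral)
  have qr: "real_of_int q \<ge> 1" "real_of_int q' \<ge> 0" "real_of_int q' \<le> real_of_int q" using qm by simp_all
  have Dge: "D \<ge> real_of_int q * real a + real_of_int q * y" unfolding D_def using qr by (simp add: algebra_simps)
  have qy: "real_of_int q * y > 0" using qr yp by simp
  have "real_of_int q * real a \<ge> 1 * 1" using qr ap by (intro mult_mono) auto
  then have qa: "real_of_int q * real a \<ge> 1" by simp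
  have Dp: "D > 0" using Dge qy qa by linarith
  have de: "\<delta> = e / D" unfolding dform Deq using xp by (simp add: field_simps)
  have e1: "e = 1 \<or> e = -1" unfolding e_def by (cases "even k") auto
  have dnz: "\<delta> \<noteq> 0" using de e1 Dp by auto
  have cop: "coprime q p"
  proof (rule coprimeI)
    fix c assume cq: "c dvd q" and cp: "c dvd p"
    have "c dvd q * Ps \<alpha> k - p * Qs \<alpha> k" using cq cp by simp
    then have "c dvd (-1)^k" using det[of \<alpha> k] unfolding q_def p_def by simp
    then show "is_unit c" by (cases "even k") auto
  qed
  have qeq: "real_of_int q * \<alpha> = real_of_int p + \<delta>" unfolding \<delta>_def by simp
  have small: "real (b * nat q) * \<bar>\<delta>\<bar> < 1"
  proof -
    have "real b * real_of_int q \<le> real a * real_of_int q" using bK qr unfolding a_def Kk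
      by (intro mult_right_mono) auto
    then have "real b * real_of_int q < D" using Dge qy by (simp add: mult.commute)
    moreover have "\<bar>\<delta>\<bar> = 1 / D" using de e1 Dp by auto
    moreover have "real (b * nat q) = real b * real_of_int q" using qm by simp
    ultimately show ?thesis using Dp rn by simp
  qed
  note ts = total_sum[OF qm(3) cop qeq dnz small]
  have cfq: "cf_q \<alpha> (K - 1) = nat q" unfolding q_def Kk using Qs_cf[of \<alpha> k] by simp
  have S: "S_sum (b * cf_q \<alpha> (K - 1)) (\<lambda>x. frac x - 1/2) \<alpha> =
     - real b / 2 + \<delta> * real b * (real b * q + 1) / 2 + (if \<delta> < 0 then real b else 0)"
  proof -
    have "S_sum (b * cf_q \<alpha> (K - 1)) (\<lambda>x. frac x - 1/2) \<alpha> = (\<Sum>n=1..b * nat q. frac (real n * \<alpha>)) - real (b * nat q) / 2"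
      unfolding S_sum_def cfq integral_saw by (simp add: sum_subtractf)
    also have "real (b * nat q) = real b * real_of_int q" using qm by simp
    finally show ?thesis unfolding ts by (simp add: field_simps)
  qed
  have sK: "(-1::real) ^ K = - e" unfolding Kk e_def by simp
  have apr: "real a \<ge> 1" using ap by simp
  have bb: "real b \<le> real a" using bK unfolding a_def Kk by simp
  note fi = final_ineq[OF qr(1) qr(2) qr(3) apr yp(1) yp(2) of_nat_0_le_iff bb D_def e1 de]
  show ?thesis unfolding S sK using fi unfolding a_def by (simp add: Kk)
qed


theorem lemma3p6:
  shows "\<exists>A0 C :: real. A0 > 0 \<and> C > 0 \<and>
    (\<forall>\<alpha> :: real. 0 \<le> \<alpha> \<and> \<alpha> < 1 \<and> \<alpha> \<notin> \<rat> \<longrightarrow>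
      (\<forall>K :: nat. K \<ge> 1 \<and> real (cf_a \<alpha> K) \<ge> A0 \<longrightarrow>
        (\<forall>b :: nat. b \<le> cf_a \<alpha> K \<longrightarrow>
          \<bar>S_sum (b * cf_q \<alpha> (K - 1)) (\<lambda>x. frac x - 1/2) \<alpha>
            - (-1) ^ K * (real b / 2) * (1 - real b / real (cf_a \<alpha> K))\<bar> \<le> C)))"
proof (rule exI[of _ 1], rule exI[of _ 2], intro conjI allI impI)
  fix \<alpha> :: real and K b :: nat
  assume h1: "0 \<le> \<alpha> \<and> \<alpha> < 1 \<and> \<alpha> \<notin> \<rat>" and h2: "K \<ge> 1 \<and> real (cf_a \<alpha> K) \<ge> 1"
    and h3: "b \<le> cf_a \<alpha> K"
  show "\<bar>S_sum (b * cf_q \<alpha> (K - 1)) (\<lambda>x. frac x - 1/2) \<alpha>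
            - (-1) ^ K * (real b / 2) * (1 - real b / real (cf_a \<alpha> K))\<bar> \<le> 2"
    using main_bound[of \<alpha> K b] h1 h2 h3 by blast
qed simp_all

end
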